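(* For $\alpha>1$, the function $r_\alpha(p)=\frac{1}{\alpha-1}\log\left(p^\alpha(1-p)^{1-\alpha}+(1-p)^\alpha p^{1-\alpha}\right)$ for $0\le p\le1$ is convex.
   Context: $\alpha>1$ is a real number; $r_\alpha$ may take the value $+\infty$ at $p\in\{0,1\}$. *)

theory Defs
  imports Complex_Main "HOL-Library.Extended_Real"
begin

text \<open>The extended-real valued function r_alpha on [0,1]; at the endpoints
  p = 0 and p = 1 the inner sum contains 0 powr (1 - alpha) with 1 - alpha < 0,
  i.e. the value +infinity, so r_alpha takes the value +infinity there.\<close>
definition r_alpha :: "real \<Rightarrow> real \<Rightarrow> ereal" where
  "r_alpha \<alpha> p =
     (if p = 0 \<or> p = 1 then \<infinity>
      else ereal (1 / (\<alpha> - 1) *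
        ln (p powr \<alpha> * (1 - p) powr (1 - \<alpha>) + (1 - p) powr \<alpha> * p powr (1 - \<alpha>))))"

end

theory Submission imports Defs "HOL-Analysis.Analysis" begin

lemma key_ineq:
  fixes p q b :: real
  assumes "p > 0" "q > 0" "b > 0"
  shows "(b+1) * p powr (2*b) * q^2 \<le> b * p powr (2*b) * p^2 + q powr (2*b) * q^2"
proof -
  have pp: "p^2 = p powr 2" and qq: "q^2 = q powr 2" using assms by simp_all
  have y: "((p powr 2) powr (b+1)) powr (b/(b+1)) * ((q powr 2) powr (b+1)) powr (1/(b+1))
        \<le> (b/(b+1)) * (p powr 2) powr (b+1) + (1/(b+1)) * (q powr 2) powr (b+1)"
    using assms by (intro Youngs_inequality_0) (auto simp: field_simps)
  have r1: "2*(b+1)*(b/(b+1)) = 2*b" using assms by (simp add: field_simps)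
  have e1: "((p powr 2) powr (b+1)) powr (b/(b+1)) = p powr (2*b)"
    unfolding powr_powr r1 ..
  have r2: "2*(b+1)*(1/(b+1)) = 2" using assms by (simp add: field_simps)
  have e2: "((q powr 2) powr (b+1)) powr (1/(b+1)) = q powr 2"
    unfolding powr_powr r2 ..
  have e3: "(p powr 2) powr (b+1) = p powr (2*b) * p powr 2"
    unfolding powr_powr powr_add[symmetric] by (simp add: field_simps)
  have e4: "(q powr 2) powr (b+1) = q powr (2*b) * q powr 2"
    unfolding powr_powr powr_add[symmetric] by (simp add: field_simps)
  have "p powr (2*b) * q powr 2 \<le> (b/(b+1)) * (p powr (2*b) * p powr 2) + (1/(b+1)) * (q powr (2*b) * q powr 2)"
    using y[unfolded e1 e2] unfolding e3 e4 .
  then have "(b+1) * (p powr (2*b) * q powr 2) \<le> (b+1) * ((b/(b+1)) * (p powr (2*b) * p powr 2) + (1/(b+1)) * (q powr (2*b) * q powr 2))"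
    using assms by (intro mult_left_mono) auto
  also have "\<dots> = b * p powr (2*b) * p powr 2 + q powr (2*b) * q powr 2"
  proof -
    have "\<And>X Y. (b+1) * ((b/(b+1)) * X + (1/(b+1)) * Y) = b * X + Y"
      using assms by (simp add: distrib_left add_pos_pos)
    then show ?thesis by (simp add: mult.assoc)
  qed
  finally show ?thesis unfolding pp qq by (simp add: mult.assoc)
qed

lemma alg_ineq:
  fixes p q A B b :: real
  assumes p: "p > 0" and q: "q > 0" and A: "A > 0" and B: "B > 0" and b: "b > 0"
    and k1: "(b+1)*A*q^2 \<le> b*A*p^2 + B*q^2"
    and k2: "(b+1)*B*p^2 \<le> b*B*q^2 + A*p^2"
  shows "0 \<le> ((2*b+1)*(2*b)*(A/p+B/q)*(p*A+q*B) - ((2*b+1)*(A-B))^2)/(b*(p*A+q*B)^2) + 1/p^2 + 1/q^2"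
proof -
  define g where "g = 2*b+1"
  define E where "E = 2*b*g*(A*q+B*p)*(p*A+q*B)*p*q - g^2*(A-B)^2*p^2*q^2 + b*(p*A+q*B)^2*(p^2+q^2)"
  define R where "R = 2*b*g*p*q*(p^2+q^2) + 2*g^2*p^2*q^2 + 2*b*p*q*(p^2+q^2) - 2*p^2*q^2"
  have Eid: "E = A*p^2*(b*A*p^2 + B*q^2 - (b+1)*A*q^2) + B*q^2*(b*B*q^2 + A*p^2 - (b+1)*B*p^2) + A*B*R"
    unfolding E_def R_def g_def by (simp add: algebra_simps power2_eq_square)
  have g1: "g \<ge> 1" using b by (simp add: g_def)
  have "g^2 \<ge> 1" using g1 by (simp add: one_le_power)
  then have "2*g^2*p^2*q^2 \<ge> 2*p^2*q^2" using p q by (simp add: mult_right_mono)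
  moreover have "2*b*g*p*q*(p^2+q^2) \<ge> 0" "2*b*p*q*(p^2+q^2) \<ge> 0" using p q b g1 by simp_all
  ultimately have R0: "R \<ge> 0" unfolding R_def by linarith
  have "E \<ge> 0" unfolding Eid using k1 k2 R0 p q A B
    by (intro add_nonneg_nonneg mult_nonneg_nonneg) auto
  have S: "p*A+q*B > 0" using p q A B by (simp add: add_pos_pos)
  define D where "D = b*(p*A+q*B)^2*p^2*q^2"
  have D: "D > 0" unfolding D_def using p q b S by simp
  define K where "K = A/p+B/q"
  define N where "N = (2*b+1)*(2*b)*K*(p*A+q*B) - ((2*b+1)*(A-B))^2"
  have h1: "N/(b*(p*A+q*B)^2) * D = N*p^2*q^2" unfolding D_def using b S by simp
  have h2: "1/p^2 * D = b*(p*A+q*B)^2*q^2" unfolding D_def using p by (simp add: power2_eq_square)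
  have h3: "1/q^2 * D = b*(p*A+q*B)^2*p^2" unfolding D_def using q by (simp add: power2_eq_square)
  have h4: "K*p^2*q^2 = (A*q+B*p)*p*q" unfolding K_def using p q by (simp add: field_simps power2_eq_square)
  have h5: "N*p^2*q^2 + b*(p*A+q*B)^2*q^2 + b*(p*A+q*B)^2*p^2 = E"
  proof -
    have "N*p^2*q^2 = (2*b+1)*(2*b)*(K*p^2*q^2)*(p*A+q*B) - ((2*b+1)*(A-B))^2*p^2*q^2"
      unfolding N_def by (simp add: algebra_simps)
    also have "\<dots> = (2*b+1)*(2*b)*((A*q+B*p)*p*q)*(p*A+q*B) - ((2*b+1)*(A-B))^2*p^2*q^2"
      unfolding h4 ..
    finally show ?thesis unfolding E_def g_def by (simp add: algebra_simps power2_eq_square)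
  qed
  have "(N/(b*(p*A+q*B)^2) + 1/p^2 + 1/q^2) * D = E"
    unfolding distrib_right h1 h2 h3 using h5 by simp
  then have "((2*b+1)*(2*b)*(A/p+B/q)*(p*A+q*B) - ((2*b+1)*(A-B))^2)/(b*(p*A+q*B)^2) + 1/p^2 + 1/q^2
        = E / D"
    unfolding N_def K_def using D by (simp add: eq_divide_eq)
  also have "\<dots> \<ge> 0" using \<open>E \<ge> 0\<close> D by simp
  finally show ?thesis .
qed

definition SS :: "real \<Rightarrow> real \<Rightarrow> real" where
  "SS b x = x powr (2*b+1) + (1-x) powr (2*b+1)"
definition FF :: "real \<Rightarrow> real \<Rightarrow> real" where
  "FF b x = ln (SS b x) / b - ln x - ln (1-x)"
definition FF1 :: "real \<Rightarrow> real \<Rightarrow> real" where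
  "FF1 b x = (2*b+1)*(x powr (2*b) - (1-x) powr (2*b)) / (b * SS b x) - 1/x + 1/(1-x)"
definition FF2 :: "real \<Rightarrow> real \<Rightarrow> real" where
  "FF2 b x = ((2*b+1)*(2*b)*(x powr (2*b-1) + (1-x) powr (2*b-1)) * SS b x
     - ((2*b+1)*(x powr (2*b) - (1-x) powr (2*b)))^2)/(b*(SS b x)^2) + 1/x^2 + 1/(1-x)^2"

lemma SS_pos: "0 < x \<Longrightarrow> x < 1 \<Longrightarrow> SS b x > 0"
  unfolding SS_def by (simp add: add_pos_pos)

lemma SS_deriv: "0 < x \<Longrightarrow> x < 1 \<Longrightarrow>
  (SS b has_real_derivative (2*b+1)*(x powr (2*b) - (1-x) powr (2*b))) (at x)"
  unfolding SS_def[abs_def]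
  by (auto intro!: derivative_eq_intros simp: algebra_simps)

lemma FF_deriv: assumes "b > 0" "0 < x" "x < 1"
  shows "(FF b has_real_derivative FF1 b x) (at x)"
proof -
  have "((\<lambda>x. ln (SS b x) / b - ln x - ln (1-x)) has_real_derivative FF1 b x) (at x)"
    using assms SS_pos[of x b]
    by (auto intro!: derivative_eq_intros SS_deriv simp: FF1_def field_simps)
  then show ?thesis unfolding FF_def[abs_def] .
qed

lemma FF1_deriv: assumes "b > 0" "0 < x" "x < 1"
  shows "(FF1 b has_real_derivative FF2 b x) (at x)"
proof -
  have "((\<lambda>x. (2*b+1)*(x powr (2*b) - (1-x) powr (2*b)) / (b * SS b x) - 1/x + 1/(1-x))
     has_real_derivative FF2 b x) (at x)"
    using assms SS_pos[of x b]
    by (auto intro!: derivative_eq_intros SS_deriv simp: FF2_def field_simps power2_eq_square)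
  then show ?thesis unfolding FF1_def[abs_def] .
qed


lemma FF2_nonneg: assumes b: "b > 0" and x: "0 < x" "x < 1"
  shows "FF2 b x \<ge> 0"
proof -
  define q where "q = 1 - x"
  have q: "q > 0" using x by (simp add: q_def)
  define A where "A = x powr (2*b)"
  define B where "B = q powr (2*b)"
  have A: "A > 0" and B: "B > 0" using x q by (simp_all add: A_def B_def)
  have e1: "x powr (2*b-1) = A/x" unfolding A_def using x by (simp add: powr_diff)
  have e2: "q powr (2*b-1) = B/q" unfolding B_def using q by (simp add: powr_diff)
  have e3: "SS b x = x*A + q*B" unfolding SS_def A_def B_def q_def[symmetric]
    using x q by (simp add: powr_add)
  have k1: "(b+1)*A*q^2 \<le> b*A*x^2 + B*q^2" using key_ineq[OF x(1) q b] by (simp add: A_def B_def)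
  have k2: "(b+1)*B*x^2 \<le> b*B*q^2 + A*x^2" using key_ineq[OF q x(1) b] by (simp add: A_def B_def)
  have "FF2 b x = ((2*b+1)*(2*b)*(A/x+B/q)*(x*A+q*B) - ((2*b+1)*(A-B))^2)/(b*(x*A+q*B)^2) + 1/x^2 + 1/q^2"
    unfolding FF2_def q_def[symmetric] e3 e1 e2 A_def[symmetric] B_def[symmetric] ..
  also have "\<dots> \<ge> 0" by (rule alg_ineq[OF x(1) q A B b k1 k2])
  finally show ?thesis .
qed

lemma FF_convex: "b > 0 \<Longrightarrow> convex_on {0<..<1} (FF b)"
  by (rule f''_ge0_imp_convex[where f'="FF1 b" and f''="FF2 b"])
     (auto intro: FF_deriv FF1_deriv FF2_nonneg)

lemma r_alpha_FF: assumes a: "\<alpha> > 1" and x: "0 < x" "x < 1"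
  shows "r_alpha \<alpha> x = ereal (FF (\<alpha>-1) x)"
proof -
  define b where "b = \<alpha> - 1"
  have b: "b > 0" using a by (simp add: b_def)
  define q where "q = 1 - x"
  have q: "q > 0" using x by (simp add: q_def)
  have al: "\<alpha> = 2*b+1 + (-b)" "1 - \<alpha> = -b" by (simp_all add: b_def)
  have "x powr \<alpha> * q powr (1 - \<alpha>) + q powr \<alpha> * x powr (1 - \<alpha>)
      = SS b x * (x powr (-b) * q powr (-b))"
    unfolding SS_def q_def[symmetric] al powr_add by (simp add: algebra_simps)
  also have "\<dots> = SS b x * (x*q) powr (-b)" by (simp add: powr_mult)
  finally have eq: "x powr \<alpha> * q powr (1 - \<alpha>) + q powr \<alpha> * x powr (1 - \<alpha>) = SS b x * (x*q) powr (-b)" .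
  have "ln (SS b x * (x*q) powr (-b)) = ln (SS b x) - b * (ln x + ln q)"
    using SS_pos[OF x, of b] x q by (simp add: ln_mult ln_powr)
  then have "1 / (\<alpha> - 1) * ln (x powr \<alpha> * q powr (1 - \<alpha>) + q powr \<alpha> * x powr (1 - \<alpha>)) = FF b x"
    unfolding eq FF_def b_def[symmetric] q_def[symmetric] using b by (simp add: field_simps)
  then show ?thesis unfolding r_alpha_def b_def q_def using x by simp
qed


lemma r_alpha_not_minf: "r_alpha a x \<noteq> -\<infinity>"
  unfolding r_alpha_def by auto

theorem lemma1:
  fixes \<alpha> :: real
  assumes "\<alpha> > 1"
  shows "\<forall>x\<in>{0..1}. \<forall>y\<in>{0..1}. \<forall>t\<in>{0..1::real}.
           r_alpha \<alpha> (t * x + (1 - t) * y)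
             \<le> ereal t * r_alpha \<alpha> x + ereal (1 - t) * r_alpha \<alpha> y"
proof (intro ballI)
  fix x y t :: real
  assume x: "x \<in> {0..1}" and y: "y \<in> {0..1}" and t: "t \<in> {0..1}"
  show "r_alpha \<alpha> (t * x + (1 - t) * y) \<le> ereal t * r_alpha \<alpha> x + ereal (1 - t) * r_alpha \<alpha> y"
  proof (cases "t = 0 \<or> t = 1")
    case True
    then show ?thesis by (auto simp: zero_ereal_def[symmetric] one_ereal_def[symmetric])
  next
    case False
    then have t0: "0 < t" "t < 1" using t by auto
    show ?thesis
    proof (cases "x \<in> {0,1} \<or> y \<in> {0,1}")
      case True
      then have "ereal t * r_alpha \<alpha> x = \<infinity> \<or> ereal (1 - t) * r_alpha \<alpha> y = \<infinity>"
        using t0 by (auto simp: r_alpha_def)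
      moreover have "ereal t * r_alpha \<alpha> x \<noteq> -\<infinity>" "ereal (1-t) * r_alpha \<alpha> y \<noteq> -\<infinity>"
        using t0 r_alpha_not_minf[of \<alpha> x] r_alpha_not_minf[of \<alpha> y]
        by (auto simp: r_alpha_def)
      ultimately have inf: "ereal t * r_alpha \<alpha> x + ereal (1 - t) * r_alpha \<alpha> y = \<infinity>"
        by auto
      show ?thesis unfolding inf by simp
    next
      case False
      then have xi: "0 < x" "x < 1" and yi: "0 < y" "y < 1" using x y by auto
      have "t * x > 0" using t0 xi by simp
      moreover have "(1-t) * y > 0" using t0 yi by simp
      ultimately have z0: "0 < t * x + (1 - t) * y" by simp
      have "t * x < t" using t0 xi by simp
      moreover have "(1-t) * y < 1 - t" using t0 yi by simp
      ultimately have z1: "t * x + (1 - t) * y < 1" by simp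
      have b: "\<alpha> - 1 > 0" using assms by simp
      have "FF (\<alpha>-1) ((1 - (1-t)) *\<^sub>R x + (1-t) *\<^sub>R y) \<le> (1 - (1-t)) * FF (\<alpha>-1) x + (1-t) * FF (\<alpha>-1) y"
        by (rule convex_onD[OF FF_convex[OF b]]) (use t0 xi yi in auto)
      then have "FF (\<alpha>-1) (t * x + (1 - t) * y) \<le> t * FF (\<alpha>-1) x + (1-t) * FF (\<alpha>-1) y"
        by simp
      then show ?thesis
        unfolding r_alpha_FF[OF assms xi] r_alpha_FF[OF assms yi] r_alpha_FF[OF assms z0 z1]
        by simp
    qed
  qed
qed

end
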